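(* Let $(\Omega,\mathcal{F})$ be a measurable space, $\mathcal{P}$ a nonempty set of probability measures on it, $\hat{\mathbb{E}}[Z]=\sup_{P\in\mathcal{P}}E_P[Z]$, and let $X,Y$ be random variables with $\hat{\mathbb{E}}[X^2]+\hat{\mathbb{E}}[Y^2]<\infty$. Let $\rho_X=\frac12(\overline{\mu}_X+\underline{\mu}_X)$, $\rho_Y=\frac12(\overline{\mu}_Y+\underline{\mu}_Y)$, $\Delta_X=\overline{\mu}_X-\underline{\mu}_X$, $\Delta_Y=\overline{\mu}_Y-\underline{\mu}_Y$. Then: (1) If $(\mu_1,\mu_2)=(\overline{\mu}_X,\overline{\mu}_Y)$ or $(\mu_1,\mu_2)=(\underline{\mu}_X,\underline{\mu}_Y)$, then $\overline{C}(X,Y)\le\hat{\mathbb{E}}[(X-\mu_1)(Y-\mu_2)]\le\overline{C}(X,Y)+\Delta_X\Delta_Y$ and $\underline{C}(X,Y)\le-\hat{\mathbb{E}}[-(X-\mu_1)(Y-\mu_2)]\le\underline{C}(X,Y)+\Delta_X\Delta_Y$. If $(\mu_1,\mu_2)=(\underline{\mu}_X,\overline{\mu}_Y)$ or $(\mu_1,\mu_2)=(\overline{\mu}_X,\underline{\mu}_Y)$, then $\overline{C}(X,Y)-\Delta_X\Delta_Y\le\hat{\mathbb{E}}[(X-\mu_1)(Y-\mu_2)]\le\overline{C}(X,Y)+\Delta_X\Delta_Y$ and $\underline{C}(X,Y)-\Delta_X\Delta_Y\le-\hat{\mathbb{E}}[-(X-\mu_1)(Y-\mu_2)]\le\underline{C}(X,Y)+\Delta_X\Delta_Y$.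 (2) Let $\overline{M}(X,Y)=\max\{\underline{\mu}_X\underline{\mu}_Y,\overline{\mu}_X\underline{\mu}_Y,\underline{\mu}_X\overline{\mu}_Y,\overline{\mu}_X\overline{\mu}_Y\}$ and $\underline{M}(X,Y)=\min\{\underline{\mu}_X\underline{\mu}_Y,\overline{\mu}_X\underline{\mu}_Y,\underline{\mu}_X\overline{\mu}_Y,\overline{\mu}_X\overline{\mu}_Y\}$. Then $\overline{C}(X,Y)+\underline{M}(X,Y)\le\hat{\mathbb{E}}[XY]\le\overline{C}(X,Y)+\overline{M}(X,Y)$ and $\underline{C}(X,Y)+\underline{M}(X,Y)\le-\hat{\mathbb{E}}[-XY]\le\underline{C}(X,Y)+\overline{M}(X,Y)$. (3) $\hat{\mathbb{E}}[(X-\rho_X)(Y-\rho_Y)]-\frac14\Delta_X\Delta_Y\le\overline{C}(X,Y)\le\hat{\mathbb{E}}[(X-\rho_X)(Y-\rho_Y)]+\frac14\Delta_X\Delta_Y$ and $-\hat{\mathbb{E}}[-(X-\rho_X)(Y-\rho_Y)]-\frac14\Delta_X\Delta_Y\le\underline{C}(X,Y)\le-\hat{\mathbb{E}}[-(X-\rho_X)(Y-\rho_Y)]+\frac14\Delta_X\Delta_Y$. (4) $0\le\overline{C}(X,Y)-\underline{C}(X,Y)\le\hat{\mathbb{E}}[(X-\rho_X)(Y-\rho_Y)]+\hat{\mathbb{E}}[-(X-\rho_X)(Y-\rho_Y)]+\frac12\Delta_X\Delta_Y$.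
   Context: For a random variable $W$ with $\hat{\mathbb{E}}[W^2]<\infty$: $\overline{\mu}_W=\hat{\mathbb{E}}[W]$, $\underline{\mu}_W=-\hat{\mathbb{E}}[-W]$, $M_W=[\underline{\mu}_W,\overline{\mu}_W]$. Upper covariance $\overline{C}(X,Y)=\max_{\mu_2\in M_Y}\min_{\mu_1\in M_X}\hat{\mathbb{E}}[(X-\mu_1)(Y-\mu_2)]$; lower covariance $\underline{C}(X,Y)=\min_{\mu_2\in M_Y}\max_{\mu_1\in M_X}\left(-\hat{\mathbb{E}}[-(X-\mu_1)(Y-\mu_2)]\right)$. *)

theory Defs
  imports "HOL-Probability.Probability"
begin

definition sublin_exp :: "'a measure set \<Rightarrow> ('a \<Rightarrow> real) \<Rightarrow> real" where
  "sublin_exp Ps Z = (SUP P\<in>Ps. integral\<^sup>L P Z)"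

definition mu_up :: "'a measure set \<Rightarrow> ('a \<Rightarrow> real) \<Rightarrow> real" where
  "mu_up Ps W = sublin_exp Ps W"

definition mu_lo :: "'a measure set \<Rightarrow> ('a \<Rightarrow> real) \<Rightarrow> real" where
  "mu_lo Ps W = - sublin_exp Ps (\<lambda>w. - W w)"

definition upper_cov :: "'a measure set \<Rightarrow> ('a \<Rightarrow> real) \<Rightarrow> ('a \<Rightarrow> real) \<Rightarrow> real" where
  "upper_cov Ps X Y =
     (SUP m2\<in>{mu_lo Ps Y..mu_up Ps Y}. INF m1\<in>{mu_lo Ps X..mu_up Ps X}.
        sublin_exp Ps (\<lambda>w. (X w - m1) * (Y w - m2)))"

definition lower_cov :: "'a measure set \<Rightarrow> ('a \<Rightarrow> real) \<Rightarrow> ('a \<Rightarrow> real) \<Rightarrow> real" where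
  "lower_cov Ps X Y =
     (INF m2\<in>{mu_lo Ps Y..mu_up Ps Y}. SUP m1\<in>{mu_lo Ps X..mu_up Ps X}.
        - sublin_exp Ps (\<lambda>w. - ((X w - m1) * (Y w - m2))))"

end

theory Submission
  imports Defs
begin

lemma up_bd: fixes s t A1 B1 A2 B2 :: real
  assumes "A1 \<le> s" "s \<le> B1" "A2 \<le> t" "t \<le> B2" "A2 \<le> 0" "0 \<le> B2" "A1 \<le> 0"
  shows "s*t \<le> max (B1*B2) (A1*A2)"
proof (cases "s \<ge> 0")
  case True
  have "s*t \<le> s*B2" using True assms by (simp add: mult_left_mono)
  also have "\<dots> \<le> B1*B2" using assms by (simp add: mult_right_mono)
  finally show ?thesis by simp
next
  case False
  have "s*t \<le> s*A2" using False assms by (simp add: mult_left_mono_neg)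
  also have "\<dots> \<le> A1*A2" using assms by (simp add: mult_right_mono_neg)
  finally show ?thesis by simp
qed
lemma lo_bd: fixes s t A1 B1 A2 B2 :: real
  assumes "A1 \<le> s" "s \<le> B1" "A2 \<le> t" "t \<le> B2" "A2 \<le> 0" "0 \<le> B2" "0 \<le> B1"
  shows "min (B1*A2) (A1*B2) \<le> s*t"
proof (cases "s \<ge> 0")
  case True
  have "B1*A2 \<le> s*A2" using True assms by (simp add: mult_right_mono_neg)
  also have "\<dots> \<le> s*t" using assms True by (simp add: mult_left_mono)
  finally show ?thesis by simp
next
  case False
  have "A1*B2 \<le> s*B2" using False assms by (simp add: mult_right_mono)
  also have "\<dots> \<le> s*t" using assms False by (simp add: mult_left_mono_neg)
  finally show ?thesis by simp
qed
lemma range: fixes x x' p y y' q l1 u1 l2 u2 :: real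
  assumes "l1 \<le> x" "x \<le> u1" "l1 \<le> x'" "x' \<le> u1" "l1 \<le> p" "p \<le> u1"
   "l2 \<le> y" "y \<le> u2" "l2 \<le> y'" "y' \<le> u2" "l2 \<le> q" "q \<le> u2"
  shows "(x-p)*(y-q) \<le> (x'-p)*(y'-q) + (u1-l1)*(u2-l2)"
proof -
  have a: "(x-p)*(y-q) \<le> max ((u1-p)*(u2-q)) ((l1-p)*(l2-q))"
    by (rule up_bd) (use assms in auto)
  have b: "min ((u1-p)*(l2-q)) ((l1-p)*(u2-q)) \<le> (x'-p)*(y'-q)"
    by (rule lo_bd) (use assms in auto)
  have c1: "(u1-p)*(u2-q) - (u1-p)*(l2-q) \<le> (u1-l1)*(u2-l2)"
  proof -
    have "(u1-p)*(u2-q) - (u1-p)*(l2-q) = (u1-p)*(u2-l2)" by (simp add: algebra_simps)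
    also have "\<dots> \<le> (u1-l1)*(u2-l2)" using assms by (intro mult_right_mono) auto
    finally show ?thesis .
  qed
  have c2: "(u1-p)*(u2-q) - (l1-p)*(u2-q) \<le> (u1-l1)*(u2-l2)"
  proof -
    have "(u1-p)*(u2-q) - (l1-p)*(u2-q) = (u1-l1)*(u2-q)" by (simp add: algebra_simps)
    also have "\<dots> \<le> (u1-l1)*(u2-l2)" using assms by (intro mult_left_mono) auto
    finally show ?thesis .
  qed
  have c3: "(l1-p)*(l2-q) - (u1-p)*(l2-q) \<le> (u1-l1)*(u2-l2)"
  proof -
    have "(l1-p)*(l2-q) - (u1-p)*(l2-q) = (u1-l1)*(q-l2)" by (simp add: algebra_simps)
    also have "\<dots> \<le> (u1-l1)*(u2-l2)" using assms by (intro mult_left_mono) auto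
    finally show ?thesis .
  qed
  have c4: "(l1-p)*(l2-q) - (l1-p)*(u2-q) \<le> (u1-l1)*(u2-l2)"
  proof -
    have "(l1-p)*(l2-q) - (l1-p)*(u2-q) = (p-l1)*(u2-l2)" by (simp add: algebra_simps)
    also have "\<dots> \<le> (u1-l1)*(u2-l2)" using assms by (intro mult_right_mono) auto
    finally show ?thesis .
  qed
  show ?thesis using a b c1 c2 c3 c4 by (simp add: max_def min_def split: if_splits)
qed
lemma half_bd: fixes s t d1 d2 :: real
  assumes "\<bar>s\<bar> \<le> d1/2" "\<bar>t\<bar> \<le> d2/2"
  shows "s*t \<le> d1*d2/4" "-(s*t) \<le> d1*d2/4"
proof -
  have "\<bar>s*t\<bar> \<le> (d1/2)*(d2/2)" unfolding abs_mult
    using assms by (intro mult_mono) auto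
  then show "s*t \<le> d1*d2/4" "-(s*t) \<le> d1*d2/4" by auto
qed
lemma prod_ge_min: fixes x b l u :: real assumes "l \<le> b" "b \<le> u"
  shows "min (x*l) (x*u) \<le> x*b" "x*b \<le> max (x*l) (x*u)"
  using assms by (cases "x \<ge> 0"; auto simp: min_def max_def mult_left_mono mult_left_mono_neg)+
lemma sup_neg: fixes f :: "'a \<Rightarrow> real" shows "(SUP x\<in>A. - f x) = - (INF x\<in>A. f x)"
  by (simp add: Inf_real_def image_image)

lemma abs_main:
  fixes I :: "'p set" and a b c :: "'p \<Rightarrow> real" and G Gn :: "real \<Rightarrow> real \<Rightarrow> real"
  assumes I_ne: "I \<noteq> {}" and bnd: "\<And>P. P \<in> I \<Longrightarrow> \<bar>a P\<bar> \<le> K \<and> \<bar>b P\<bar> \<le> K \<and> \<bar>c P\<bar> \<le> K"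
    and G: "\<And>m1 m2. G m1 m2 = (SUP P\<in>I. c P - m2 * a P - m1 * b P + m1 * m2)"
    and Gn: "\<And>m1 m2. Gn m1 m2 = (SUP P\<in>I. - (c P - m2 * a P - m1 * b P + m1 * m2))"
    and GXY: "GXY = (SUP P\<in>I. c P)" and GnXY: "GnXY = (SUP P\<in>I. - c P)"
    and uX: "uX = (SUP P\<in>I. a P)" and lX: "lX = - (SUP P\<in>I. - a P)"
    and uY: "uY = (SUP P\<in>I. b P)" and lY: "lY = - (SUP P\<in>I. - b P)"
    and Cu: "Cu = (SUP m2\<in>{lY..uY}. INF m1\<in>{lX..uX}. G m1 m2)"
    and Cl: "Cl = (INF m2\<in>{lY..uY}. SUP m1\<in>{lX..uX}. - Gn m1 m2)"
    and rX: "rX = (uX + lX) / 2" and rY: "rY = (uY + lY) / 2"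
    and dX: "dX = uX - lX" and dY: "dY = uY - lY"
  shows
    "(\<forall>m1 m2. (m1, m2) \<in> {(uX, uY), (lX, lY)} \<longrightarrow>
        Cu \<le> G m1 m2
      \<and> G m1 m2 \<le> Cu + dX * dY
      \<and> Cl \<le> - Gn m1 m2
      \<and> - Gn m1 m2 \<le> Cl + dX * dY)
   \<and> (\<forall>m1 m2. (m1, m2) \<in> {(lX, uY), (uX, lY)} \<longrightarrow>
        Cu - dX * dY \<le> G m1 m2
      \<and> G m1 m2 \<le> Cu + dX * dY
      \<and> Cl - dX * dY \<le> - Gn m1 m2
      \<and> - Gn m1 m2 \<le> Cl + dX * dY)
   \<and> (let Mu = Max {lX * lY, uX * lY, lX * uY, uX * uY};
          Ml = Min {lX * lY, uX * lY, lX * uY, uX * uY}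
      in Cu + Ml \<le> GXY \<and> GXY \<le> Cu + Mu
       \<and> Cl + Ml \<le> - GnXY \<and> - GnXY \<le> Cl + Mu)
   \<and> (G rX rY - dX * dY / 4 \<le> Cu
      \<and> Cu \<le> G rX rY + dX * dY / 4
      \<and> - Gn rX rY - dX * dY / 4 \<le> Cl
      \<and> Cl \<le> - Gn rX rY + dX * dY / 4)
   \<and> (0 \<le> Cu - Cl
      \<and> Cu - Cl \<le> G rX rY + Gn rX rY + dX * dY / 2)"
proof -
  define k where "k = (\<lambda>P m1 m2. c P - m2 * a P - m1 * b P + m1 * m2)"
  define L where "L = (\<lambda>m1 m2. INF P\<in>I. k P m1 m2)"
  have Lk: "L m1 m2 = (INF P\<in>I. k P m1 m2)" for m1 m2 unfolding L_def ..
  have Gk: "G m1 m2 = (SUP P\<in>I. k P m1 m2)" for m1 m2 unfolding G k_def ..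
  have GnL: "Gn m1 m2 = - L m1 m2" for m1 m2 unfolding Gn L_def k_def by (rule sup_neg)
  have lX': "lX = (INF P\<in>I. a P)" unfolding lX sup_neg by simp
  have lY': "lY = (INF P\<in>I. b P)" unfolding lY sup_neg by simp
  have kid: "k P m1 m2 = (c P - a P * b P) + (m1 - a P) * (m2 - b P)" for P m1 m2
    unfolding k_def by (simp add: algebra_simps)
  have kabs: "\<bar>k P m1 m2\<bar> \<le> K + \<bar>m2\<bar> * K + \<bar>m1\<bar> * K + \<bar>m1 * m2\<bar>" if "P \<in> I" for P m1 m2
  proof -
    have "\<bar>m2 * a P\<bar> \<le> \<bar>m2\<bar> * K" unfolding abs_mult using bnd[OF that]
      by (intro mult_left_mono) auto
    moreover have "\<bar>m1 * b P\<bar> \<le> \<bar>m1\<bar> * K" unfolding abs_mult using bnd[OF that]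
      by (intro mult_left_mono) auto
    ultimately show ?thesis unfolding k_def using bnd[OF that] by linarith
  qed
  have kba: "bdd_above ((\<lambda>P. k P m1 m2) ` I)" for m1 m2
    using kabs by (intro bdd_aboveI2[where M="K + \<bar>m2\<bar> * K + \<bar>m1\<bar> * K + \<bar>m1 * m2\<bar>"])
      (auto simp: abs_le_iff)
  have kbb: "bdd_below ((\<lambda>P. k P m1 m2) ` I)" for m1 m2
  proof (intro bdd_belowI2[where m="- (K + \<bar>m2\<bar> * K + \<bar>m1\<bar> * K + \<bar>m1 * m2\<bar>)"])
    fix P assume "P \<in> I"
    from kabs[OF this, of m1 m2] show "- (K + \<bar>m2\<bar> * K + \<bar>m1\<bar> * K + \<bar>m1 * m2\<bar>) \<le> k P m1 m2"
      by linarith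
  qed
  have aba: "bdd_above (a ` I)" "bdd_below (a ` I)" "bdd_above (b ` I)" "bdd_below (b ` I)"
    "bdd_above (c ` I)" "bdd_below (c ` I)"
    using bnd by (auto intro!: bdd_aboveI2[where M=K] bdd_belowI2[where m="-K"] simp: abs_le_iff; force)+
  have a_in: "lX \<le> a P \<and> a P \<le> uX" if "P \<in> I" for P
    unfolding lX' uX using that aba by (auto intro: cINF_lower cSUP_upper)
  have b_in: "lY \<le> b P \<and> b P \<le> uY" if "P \<in> I" for P
    unfolding lY' uY using that aba by (auto intro: cINF_lower cSUP_upper)
  obtain P0 where P0: "P0 \<in> I" using I_ne by auto
  have lX_uX: "lX \<le> uX" using a_in[OF P0] by linarith
  have lY_uY: "lY \<le> uY" using b_in[OF P0] by linarith
  have G_ge: "k P m1 m2 \<le> G m1 m2" if "P \<in> I" for P m1 m2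
    unfolding Gk using that by (rule cSUP_upper[OF _ kba])
  have L_le: "L m1 m2 \<le> k P m1 m2" if "P \<in> I" for P m1 m2
    unfolding Lk using that by (rule cINF_lower[OF kbb])
  have trans: "G m1 m2 \<le> G m1' m2' + \<delta> \<and> L m1 m2 \<le> L m1' m2' + \<delta>"
    if h: "\<And>P. P \<in> I \<Longrightarrow> k P m1 m2 \<le> k P m1' m2' + \<delta>" for m1 m2 m1' m2' \<delta>
  proof
    show "G m1 m2 \<le> G m1' m2' + \<delta>" unfolding Gk[of m1 m2]
    proof (rule cSUP_least[OF I_ne])
      fix P assume "P \<in> I"
      then show "k P m1 m2 \<le> G m1' m2' + \<delta>" using h G_ge[of P m1' m2'] by fastforce
    qed
    have "L m1 m2 - \<delta> \<le> L m1' m2'" unfolding Lk[of m1' m2']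
    proof (rule cINF_greatest[OF I_ne])
      fix P assume "P \<in> I"
      then show "L m1 m2 - \<delta> \<le> k P m1' m2'" using h L_le[of P m1 m2] by fastforce
    qed
    then show "L m1 m2 \<le> L m1' m2' + \<delta>" by simp
  qed
  let ?IX = "{lX..uX}" and ?IY = "{lY..uY}"
  have IXne: "?IX \<noteq> {}" and IYne: "?IY \<noteq> {}" using lX_uX lY_uY by auto
  have R: "k P m1 m2 \<le> k P m1' m2' + dX * dY"
    if "P \<in> I" "m1 \<in> ?IX" "m1' \<in> ?IX" "m2 \<in> ?IY" "m2' \<in> ?IY" for P m1 m2 m1' m2'
  proof -
    have "(m1 - a P) * (m2 - b P) \<le> (m1' - a P) * (m2' - b P) + (uX - lX) * (uY - lY)"
      using that a_in[OF that(1)] b_in[OF that(1)] by (intro range) auto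
    then show ?thesis unfolding kid dX dY by simp
  qed
  have Rt: "G m1 m2 \<le> G m1' m2' + dX * dY \<and> L m1 m2 \<le> L m1' m2' + dX * dY"
    if "m1 \<in> ?IX" "m1' \<in> ?IX" "m2 \<in> ?IY" "m2' \<in> ?IY" for m1 m2 m1' m2'
    using that by (intro trans R) auto
  have lXin: "lX \<in> ?IX" and lYin: "lY \<in> ?IY" and uXin: "uX \<in> ?IX" and uYin: "uY \<in> ?IY"
    using lX_uX lY_uY by auto
  have bddG: "bdd_below ((\<lambda>m1. G m1 m2) ` ?IX)" if "m2 \<in> ?IY" for m2
    using Rt[OF lXin _ lYin that] by (intro bdd_belowI2[where m="G lX lY - dX * dY"]) force
  have bddF: "bdd_above ((\<lambda>m2. INF m1\<in>?IX. G m1 m2) ` ?IY)"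
  proof (intro bdd_aboveI2[where M="G lX lY + dX * dY"])
    fix m2 assume m2: "m2 \<in> ?IY"
    have "(INF m1\<in>?IX. G m1 m2) \<le> G lX m2" by (rule cINF_lower[OF bddG[OF m2] lXin])
    also have "\<dots> \<le> G lX lY + dX * dY" using Rt[OF lXin lXin m2 lYin] by simp
    finally show "(INF m1\<in>?IX. G m1 m2) \<le> G lX lY + dX * dY" .
  qed
  have bddL: "bdd_above ((\<lambda>m1. L m1 m2) ` ?IX)" if "m2 \<in> ?IY" for m2
    using Rt[OF _ lXin that lYin] by (intro bdd_aboveI2[where M="L lX lY + dX * dY"]) force
  have bddH: "bdd_below ((\<lambda>m2. SUP m1\<in>?IX. L m1 m2) ` ?IY)"
  proof (intro bdd_belowI2[where m="L lX lY - dX * dY"])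
    fix m2 assume m2: "m2 \<in> ?IY"
    have "L lX lY - dX * dY \<le> L lX m2" using Rt[OF lXin lXin lYin m2] by simp
    also have "\<dots> \<le> (SUP m1\<in>?IX. L m1 m2)" by (rule cSUP_upper[OF lXin bddL[OF m2]])
    finally show "L lX lY - dX * dY \<le> (SUP m1\<in>?IX. L m1 m2)" .
  qed
  have Cl': "Cl = (INF m2\<in>?IY. SUP m1\<in>?IX. L m1 m2)" unfolding Cl GnL by simp
  have CuU: "Cu \<le> t" if h: "\<And>m2. m2 \<in> ?IY \<Longrightarrow> \<exists>m1\<in>?IX. G m1 m2 \<le> t" for t
    unfolding Cu
  proof (rule cSUP_least[OF IYne])
    fix m2 assume m2: "m2 \<in> ?IY"
    then obtain m1 where "m1 \<in> ?IX" "G m1 m2 \<le> t" using h by blast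
    then show "(INF m1\<in>?IX. G m1 m2) \<le> t" by (intro cINF_lower2[OF bddG[OF m2]])
  qed
  have CuL: "t \<le> Cu" if m2: "m2 \<in> ?IY" and h: "\<And>m1. m1 \<in> ?IX \<Longrightarrow> t \<le> G m1 m2" for t m2
    unfolding Cu
  proof (rule cSUP_upper2[OF bddF m2])
    show "t \<le> (INF m1\<in>?IX. G m1 m2)" using h by (intro cINF_greatest[OF IXne])
  qed
  have ClU: "Cl \<le> t" if m2: "m2 \<in> ?IY" and h: "\<And>m1. m1 \<in> ?IX \<Longrightarrow> L m1 m2 \<le> t" for t m2
    unfolding Cl'
  proof (rule cINF_lower2[OF bddH m2])
    show "(SUP m1\<in>?IX. L m1 m2) \<le> t" using h by (intro cSUP_least[OF IXne])
  qed
  have ClL: "t \<le> Cl" if h: "\<And>m2. m2 \<in> ?IY \<Longrightarrow> \<exists>m1\<in>?IX. t \<le> L m1 m2" for t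
    unfolding Cl'
  proof (rule cINF_greatest[OF IYne])
    fix m2 assume m2: "m2 \<in> ?IY"
    then obtain m1 where "m1 \<in> ?IX" "t \<le> L m1 m2" using h by blast
    then show "t \<le> (SUP m1\<in>?IX. L m1 m2)" by (intro cSUP_upper2[OF bddL[OF m2]])
  qed
  have box: "G m1 m2 - dX * dY \<le> Cu \<and> Cu \<le> G m1 m2 + dX * dY
           \<and> L m1 m2 - dX * dY \<le> Cl \<and> Cl \<le> L m1 m2 + dX * dY"
    if m1: "m1 \<in> ?IX" and m2: "m2 \<in> ?IY" for m1 m2
  proof (intro conjI)
    show "G m1 m2 - dX * dY \<le> Cu"
      using Rt[OF m1 _ m2 lYin] by (intro CuL[OF lYin]) force
    show "Cu \<le> G m1 m2 + dX * dY"
      using Rt[OF lXin m1 _ m2] lXin by (intro CuU) blast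
    show "L m1 m2 - dX * dY \<le> Cl"
      using Rt[OF m1 lXin m2] lXin by (intro ClL) force
    show "Cl \<le> L m1 m2 + dX * dY"
      using Rt[OF _ m1 lYin m2] by (intro ClU[OF lYin]) force
  qed
  have rXin: "rX \<in> ?IX" and rYin: "rY \<in> ?IY" using lX_uX lY_uY rX rY by auto
  have hX: "\<bar>rX - m\<bar> \<le> dX / 2" if "m \<in> ?IX" for m using that unfolding abs_le_iff rX dX by (auto simp: field_simps)
  have hY: "\<bar>rY - m\<bar> \<le> dY / 2" if "m \<in> ?IY" for m using that unfolding abs_le_iff rY dY by (auto simp: field_simps)
  have aX: "a P \<in> ?IX" "b P \<in> ?IY" if "P \<in> I" for P using a_in[OF that] b_in[OF that] by auto
  have neg0: "\<And>t. - (- t) = (t::real)" by simp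
  have p1: "Cu \<le> G uX uY" "Cu \<le> G lX lY" "Cl \<le> L uX uY" "Cl \<le> L lX lY"
  proof -
    show "Cu \<le> G uX uY"
    proof (rule CuU)
      fix m2 assume m2: "m2 \<in> ?IY"
      have "G uX m2 \<le> G uX uY + 0"
      proof (rule trans[THEN conjunct1])
        fix P assume P: "P \<in> I"
        have "(uX - a P) * (m2 - b P) \<le> (uX - a P) * (uY - b P)"
          using a_in[OF P] m2 by (intro mult_left_mono) auto
        then show "k P uX m2 \<le> k P uX uY + 0" unfolding kid by simp
      qed
      then show "\<exists>m1\<in>?IX. G m1 m2 \<le> G uX uY" using uXin by auto
    qed
    show "Cu \<le> G lX lY"
    proof (rule CuU)
      fix m2 assume m2: "m2 \<in> ?IY"
      have "G lX m2 \<le> G lX lY + 0"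
      proof (rule trans[THEN conjunct1])
        fix P assume P: "P \<in> I"
        have "(lX - a P) * (m2 - b P) \<le> (lX - a P) * (lY - b P)"
          using a_in[OF P] m2 by (intro mult_left_mono_neg) auto
        then show "k P lX m2 \<le> k P lX lY + 0" unfolding kid by simp
      qed
      then show "\<exists>m1\<in>?IX. G m1 m2 \<le> G lX lY" using lXin by auto
    qed
    show "Cl \<le> L uX uY"
    proof (rule ClU[OF uYin])
      fix m1 assume m1: "m1 \<in> ?IX"
      have "L m1 uY \<le> L uX uY + 0"
      proof (rule trans[THEN conjunct2])
        fix P assume P: "P \<in> I"
        have "(m1 - a P) * (uY - b P) \<le> (uX - a P) * (uY - b P)"
          using b_in[OF P] m1 by (intro mult_right_mono) auto
        then show "k P m1 uY \<le> k P uX uY + 0" unfolding kid by simp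
      qed
      then show "L m1 uY \<le> L uX uY" by simp
    qed
    show "Cl \<le> L lX lY"
    proof (rule ClU[OF lYin])
      fix m1 assume m1: "m1 \<in> ?IX"
      have "L m1 lY \<le> L lX lY + 0"
      proof (rule trans[THEN conjunct2])
        fix P assume P: "P \<in> I"
        have "(m1 - a P) * (lY - b P) \<le> (lX - a P) * (lY - b P)"
          using b_in[OF P] m1 by (intro mult_right_mono_neg) auto
        then show "k P m1 lY \<le> k P lX lY + 0" unfolding kid by simp
      qed
      then show "L m1 lY \<le> L lX lY" by simp
    qed
  qed
  have p3: "G rX rY - dX * dY / 4 \<le> Cu" "Cu \<le> G rX rY + dX * dY / 4"
    "L rX rY - dX * dY / 4 \<le> Cl" "Cl \<le> L rX rY + dX * dY / 4"
  proof -
    show "G rX rY - dX * dY / 4 \<le> Cu"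
    proof (rule CuL[OF rYin])
      fix m1 assume m1: "m1 \<in> ?IX"
      have "G rX rY \<le> G m1 rY + dX * dY / 4"
      proof (rule trans[THEN conjunct1])
        fix P assume P: "P \<in> I"
        have "(rX - m1) * (rY - b P) \<le> dX * dY / 4"
          by (rule half_bd(1)) (use hX[OF m1] hY[OF aX(2)[OF P]] in auto)
        moreover have "k P rX rY - k P m1 rY = (rX - m1) * (rY - b P)" unfolding k_def
          by (simp add: algebra_simps)
        ultimately show "k P rX rY \<le> k P m1 rY + dX * dY / 4" by linarith
      qed
      then show "G rX rY - dX * dY / 4 \<le> G m1 rY" by simp
    qed
    show "Cu \<le> G rX rY + dX * dY / 4"
    proof (rule CuU)
      fix m2 assume m2: "m2 \<in> ?IY"
      have "G rX m2 \<le> G rX rY + dX * dY / 4"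
      proof (rule trans[THEN conjunct1])
        fix P assume P: "P \<in> I"
        have "- ((rX - a P) * (rY - m2)) \<le> dX * dY / 4"
          by (rule half_bd(2))
             (use hX[OF aX(1)[OF P]] hY[OF m2] in auto)
        moreover have "k P rX m2 - k P rX rY = - ((rX - a P) * (rY - m2))" unfolding k_def
          by (simp add: algebra_simps)
        ultimately show "k P rX m2 \<le> k P rX rY + dX * dY / 4" by linarith
      qed
      then show "\<exists>m1\<in>?IX. G m1 m2 \<le> G rX rY + dX * dY / 4" using rXin by auto
    qed
    show "L rX rY - dX * dY / 4 \<le> Cl"
    proof (rule ClL)
      fix m2 assume m2: "m2 \<in> ?IY"
      have "L rX rY \<le> L rX m2 + dX * dY / 4"
      proof (rule trans[THEN conjunct2])
        fix P assume P: "P \<in> I"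
        have "(rX - a P) * (rY - m2) \<le> dX * dY / 4"
          by (rule half_bd(1)) (use hX[OF aX(1)[OF P]] hY[OF m2] in auto)
        moreover have "k P rX rY - k P rX m2 = (rX - a P) * (rY - m2)" unfolding k_def
          by (simp add: algebra_simps)
        ultimately show "k P rX rY \<le> k P rX m2 + dX * dY / 4" by linarith
      qed
      then show "\<exists>m1\<in>?IX. L rX rY - dX * dY / 4 \<le> L m1 m2" using rXin by force
    qed
    show "Cl \<le> L rX rY + dX * dY / 4"
    proof (rule ClU[OF rYin])
      fix m1 assume m1: "m1 \<in> ?IX"
      show "L m1 rY \<le> L rX rY + dX * dY / 4"
      proof (rule trans[THEN conjunct2])
        fix P assume P: "P \<in> I"
        have "- ((rX - m1) * (rY - b P)) \<le> dX * dY / 4"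
          by (rule half_bd(2))
             (use hX[OF m1] hY[OF aX(2)[OF P]] in auto)
        moreover have "k P m1 rY - k P rX rY = - ((rX - m1) * (rY - b P))" unfolding k_def
          by (simp add: algebra_simps)
        ultimately show "k P m1 rY \<le> k P rX rY + dX * dY / 4" by linarith
      qed
    qed
  qed
  have cP: "Cl \<le> c P - a P * b P \<and> c P - a P * b P \<le> Cu" if P: "P \<in> I" for P
  proof
    have kk: "k P m1 (b P) = c P - a P * b P" for m1 unfolding kid by simp
    show "c P - a P * b P \<le> Cu"
      by (rule CuL[OF aX(2)[OF P]]) (use G_ge[OF P] kk in metis)
    show "Cl \<le> c P - a P * b P"
      by (rule ClU[OF aX(2)[OF P]]) (use L_le[OF P] kk in metis)
  qed
  define Mu where "Mu = Max {lX * lY, uX * lY, lX * uY, uX * uY}"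
  define Ml where "Ml = Min {lX * lY, uX * lY, lX * uY, uX * uY}"
  have Mu': "Mu = max (lX * lY) (max (uX * lY) (max (lX * uY) (uX * uY)))" unfolding Mu_def by simp
  have Ml': "Ml = min (lX * lY) (min (uX * lY) (min (lX * uY) (uX * uY)))" unfolding Ml_def by simp
  have prodb: "Ml \<le> x * y \<and> x * y \<le> Mu" if "x \<in> ?IX" "y \<in> ?IY" for x y
  proof -
    have 1: "min (x * lY) (x * uY) \<le> x * y" "x * y \<le> max (x * lY) (x * uY)"
      using prod_ge_min[of lY y uY x] that by auto
    have 2: "min (lY * lX) (lY * uX) \<le> lY * x" "lY * x \<le> max (lY * lX) (lY * uX)"
      using prod_ge_min[of lX x uX lY] that by auto
    have 3: "min (uY * lX) (uY * uX) \<le> uY * x" "uY * x \<le> max (uY * lX) (uY * uX)"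
      using prod_ge_min[of lX x uX uY] that by auto
    show ?thesis unfolding Mu' Ml' using 1 2 3 by (auto simp: min_def max_def mult.commute split: if_splits)
  qed
  have GXYb: "c P \<le> GXY" if "P \<in> I" for P unfolding GXY using that by (rule cSUP_upper[OF _ aba(5)])
  have LXY: "- GnXY = (INF P\<in>I. c P)" unfolding GnXY sup_neg by simp
  have LXYb: "- GnXY \<le> c P" if "P \<in> I" for P unfolding LXY using that by (rule cINF_lower[OF aba(6)])
  have p2: "Cu + Ml \<le> GXY" "GXY \<le> Cu + Mu" "Cl + Ml \<le> - GnXY" "- GnXY \<le> Cl + Mu"
  proof -
    have "Cu \<le> GXY - Ml"
    proof (rule CuU)
      fix m2 assume m2: "m2 \<in> ?IY"
      define m1 where "m1 = (if 0 \<le> m2 then lX else uX)"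
      have m1: "m1 \<in> ?IX" unfolding m1_def using lXin uXin by auto
      have "G m1 m2 \<le> GXY - Ml" unfolding Gk
      proof (rule cSUP_least[OF I_ne])
        fix P assume P: "P \<in> I"
        have e: "k P m1 m2 = c P + m2 * (m1 - a P) - m1 * b P" unfolding k_def by (simp add: algebra_simps)
        have "m2 * (m1 - a P) \<le> 0" using a_in[OF P] unfolding m1_def
          by (cases "0 \<le> m2") (auto intro: mult_nonneg_nonpos mult_nonpos_nonneg)
        moreover have "Ml \<le> m1 * b P" using prodb[OF m1 aX(2)[OF P]] by simp
        ultimately show "k P m1 m2 \<le> GXY - Ml" using e GXYb[OF P] by linarith
      qed
      then show "\<exists>m1\<in>?IX. G m1 m2 \<le> GXY - Ml" using m1 by blast
    qed
    then show "Cu + Ml \<le> GXY" by simp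
    show "GXY \<le> Cu + Mu" unfolding GXY
    proof (rule cSUP_least[OF I_ne])
      fix P assume P: "P \<in> I"
      show "c P \<le> Cu + Mu" using cP[OF P] prodb[OF aX[OF P]] by linarith
    qed
    have "Cl + Ml \<le> (INF P\<in>I. c P)"
    proof (rule cINF_greatest[OF I_ne])
      fix P assume P: "P \<in> I"
      show "Cl + Ml \<le> c P" using cP[OF P] prodb[OF aX[OF P]] by linarith
    qed
    then show "Cl + Ml \<le> - GnXY" unfolding LXY .
    have "- GnXY - Mu \<le> Cl"
    proof (rule ClL)
      fix m2 assume m2: "m2 \<in> ?IY"
      define m1 where "m1 = (if 0 \<le> m2 then uX else lX)"
      have m1: "m1 \<in> ?IX" unfolding m1_def using lXin uXin by auto
      have "- GnXY - Mu \<le> L m1 m2" unfolding Lk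
      proof (rule cINF_greatest[OF I_ne])
        fix P assume P: "P \<in> I"
        have e: "k P m1 m2 = c P + m2 * (m1 - a P) - m1 * b P" unfolding k_def by (simp add: algebra_simps)
        have "0 \<le> m2 * (m1 - a P)" using a_in[OF P] unfolding m1_def
          by (cases "0 \<le> m2") (auto intro: mult_nonneg_nonneg mult_nonpos_nonpos)
        moreover have "m1 * b P \<le> Mu" using prodb[OF m1 aX(2)[OF P]] by simp
        ultimately show "- GnXY - Mu \<le> k P m1 m2" using e LXYb[OF P] by linarith
      qed
      then show "\<exists>m1\<in>?IX. - GnXY - Mu \<le> L m1 m2" using m1 by blast
    qed
    then show "- GnXY \<le> Cl + Mu" by simp
  qed
  have b1: "G uX uY - dX * dY \<le> Cu \<and> Cu \<le> G uX uY + dX * dY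
           \<and> L uX uY - dX * dY \<le> Cl \<and> Cl \<le> L uX uY + dX * dY" by (rule box[OF uXin uYin])
  have b2: "G lX lY - dX * dY \<le> Cu \<and> Cu \<le> G lX lY + dX * dY
           \<and> L lX lY - dX * dY \<le> Cl \<and> Cl \<le> L lX lY + dX * dY" by (rule box[OF lXin lYin])
  have b3: "G lX uY - dX * dY \<le> Cu \<and> Cu \<le> G lX uY + dX * dY
           \<and> L lX uY - dX * dY \<le> Cl \<and> Cl \<le> L lX uY + dX * dY" by (rule box[OF lXin uYin])
  have b4: "G uX lY - dX * dY \<le> Cu \<and> Cu \<le> G uX lY + dX * dY
           \<and> L uX lY - dX * dY \<le> Cl \<and> Cl \<le> L uX lY + dX * dY" by (rule box[OF uXin lYin])
  have p4: "0 \<le> Cu - Cl" using cP[OF P0] by linarith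
  show ?thesis
    unfolding GnL neg0 Let_def Mu_def[symmetric] Ml_def[symmetric]
    using p1 p2 p3 p4 b1 b2 b3 b4 by auto
qed

theorem proposition3p16:
  fixes M :: "'a measure" and Ps :: "'a measure set" and X Y :: "'a \<Rightarrow> real"
  assumes Ps_ne: "Ps \<noteq> {}"
    and Ps_prob: "\<And>P. P \<in> Ps \<Longrightarrow> prob_space P \<and> sets P = sets M"
    and X_meas: "X \<in> borel_measurable M"
    and Y_meas: "Y \<in> borel_measurable M"
    and fin: "(SUP P\<in>Ps. \<integral>\<^sup>+ w. ennreal ((X w)\<^sup>2) \<partial>P)
              + (SUP P\<in>Ps. \<integral>\<^sup>+ w. ennreal ((Y w)\<^sup>2) \<partial>P) < \<infinity>"
  defines "E \<equiv> sublin_exp Ps"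
    and "uX \<equiv> mu_up Ps X" and "lX \<equiv> mu_lo Ps X"
    and "uY \<equiv> mu_up Ps Y" and "lY \<equiv> mu_lo Ps Y"
    and "Cu \<equiv> upper_cov Ps X Y" and "Cl \<equiv> lower_cov Ps X Y"
    and "rX \<equiv> (mu_up Ps X + mu_lo Ps X) / 2" and "rY \<equiv> (mu_up Ps Y + mu_lo Ps Y) / 2"
    and "dX \<equiv> mu_up Ps X - mu_lo Ps X" and "dY \<equiv> mu_up Ps Y - mu_lo Ps Y"
  shows
    "(\<forall>m1 m2. (m1, m2) \<in> {(uX, uY), (lX, lY)} \<longrightarrow>
        Cu \<le> E (\<lambda>w. (X w - m1) * (Y w - m2))
      \<and> E (\<lambda>w. (X w - m1) * (Y w - m2)) \<le> Cu + dX * dY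
      \<and> Cl \<le> - E (\<lambda>w. - ((X w - m1) * (Y w - m2)))
      \<and> - E (\<lambda>w. - ((X w - m1) * (Y w - m2))) \<le> Cl + dX * dY)
   \<and> (\<forall>m1 m2. (m1, m2) \<in> {(lX, uY), (uX, lY)} \<longrightarrow>
        Cu - dX * dY \<le> E (\<lambda>w. (X w - m1) * (Y w - m2))
      \<and> E (\<lambda>w. (X w - m1) * (Y w - m2)) \<le> Cu + dX * dY
      \<and> Cl - dX * dY \<le> - E (\<lambda>w. - ((X w - m1) * (Y w - m2)))
      \<and> - E (\<lambda>w. - ((X w - m1) * (Y w - m2))) \<le> Cl + dX * dY)
   \<and> (let Mu = Max {lX * lY, uX * lY, lX * uY, uX * uY};
          Ml = Min {lX * lY, uX * lY, lX * uY, uX * uY}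
      in Cu + Ml \<le> E (\<lambda>w. X w * Y w) \<and> E (\<lambda>w. X w * Y w) \<le> Cu + Mu
       \<and> Cl + Ml \<le> - E (\<lambda>w. - (X w * Y w)) \<and> - E (\<lambda>w. - (X w * Y w)) \<le> Cl + Mu)
   \<and> (E (\<lambda>w. (X w - rX) * (Y w - rY)) - dX * dY / 4 \<le> Cu
      \<and> Cu \<le> E (\<lambda>w. (X w - rX) * (Y w - rY)) + dX * dY / 4
      \<and> - E (\<lambda>w. - ((X w - rX) * (Y w - rY))) - dX * dY / 4 \<le> Cl
      \<and> Cl \<le> - E (\<lambda>w. - ((X w - rX) * (Y w - rY))) + dX * dY / 4)
   \<and> (0 \<le> Cu - Cl
      \<and> Cu - Cl \<le> E (\<lambda>w. (X w - rX) * (Y w - rY))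
                   + E (\<lambda>w. - ((X w - rX) * (Y w - rY))) + dX * dY / 2)"
  proof -
  have Pp: "prob_space P" "sets P = sets M" if "P \<in> Ps" for P using Ps_prob[OF that] by auto
  have Xm: "X \<in> borel_measurable P" and Ym: "Y \<in> borel_measurable P" if "P \<in> Ps" for P
    using X_meas Y_meas measurable_cong_sets[OF Pp(2)[OF that] refl, of borel] by auto
  define SX where "SX = (SUP P\<in>Ps. \<integral>\<^sup>+ w. ennreal ((X w)\<^sup>2) \<partial>P)"
  define SY where "SY = (SUP P\<in>Ps. \<integral>\<^sup>+ w. ennreal ((Y w)\<^sup>2) \<partial>P)"
  have SXf: "SX < \<infinity>" and SYf: "SY < \<infinity>" using fin unfolding SX_def SY_def ennreal_add_less_top by auto
  define B where "B = enn2real SX + enn2real SY"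
  have sq: "integrable P (\<lambda>w. (Z w)\<^sup>2) \<and> (\<integral>w. (Z w)\<^sup>2 \<partial>P) \<le> enn2real S"
    if P: "P \<in> Ps" and Zm: "Z \<in> borel_measurable P"
      and S: "S = (SUP P\<in>Ps. \<integral>\<^sup>+ w. ennreal ((Z w)\<^sup>2) \<partial>P)" and Sf: "S < \<infinity>" for P Z S
  proof
    have le: "(\<integral>\<^sup>+ w. ennreal ((Z w)\<^sup>2) \<partial>P) \<le> S" unfolding S using P by (rule SUP_upper)
    have m2: "(\<lambda>w. (Z w)\<^sup>2) \<in> borel_measurable P" using Zm by measurable
    show "integrable P (\<lambda>w. (Z w)\<^sup>2)"
      by (rule integrableI_bounded[OF m2]) (use le Sf in simp)
    have "(\<integral>w. (Z w)\<^sup>2 \<partial>P) = enn2real (\<integral>\<^sup>+ w. ennreal ((Z w)\<^sup>2) \<partial>P)"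
      by (rule integral_eq_nn_integral[OF m2]) simp
    also have "\<dots> \<le> enn2real S" using le Sf by (intro enn2real_mono) simp_all
    finally show "(\<integral>w. (Z w)\<^sup>2 \<partial>P) \<le> enn2real S" .
  qed
  have lin: "integrable P Z \<and> \<bar>\<integral>w. Z w \<partial>P\<bar> \<le> 1 + enn2real S"
    if P: "P \<in> Ps" and Zm: "Z \<in> borel_measurable P" and isq: "integrable P (\<lambda>w. (Z w)\<^sup>2)"
      and iS: "(\<integral>w. (Z w)\<^sup>2 \<partial>P) \<le> enn2real S" for P Z S
  proof
    interpret prob_space P by (rule Pp[OF P])
    have pt: "\<bar>z\<bar> \<le> 1 + z\<^sup>2" for z :: real
    proof (cases "\<bar>z\<bar> \<le> 1")
      case False
      then have "\<bar>z\<bar> * 1 \<le> \<bar>z\<bar> * \<bar>z\<bar>" by (intro mult_left_mono) auto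
      then show ?thesis by (simp add: power2_eq_square)
    qed (simp add: add_increasing2)
    have ib: "integrable P (\<lambda>w. 1 + (Z w)\<^sup>2)" using isq by simp
    show iZ: "integrable P Z"
      by (rule Bochner_Integration.integrable_bound[OF ib Zm]) (use pt in \<open>auto intro!: AE_I2 simp: add_increasing2\<close>)
    have "\<bar>\<integral>w. Z w \<partial>P\<bar> \<le> (\<integral>w. \<bar>Z w\<bar> \<partial>P)" by (rule integral_abs_bound)
    also have "\<dots> \<le> (\<integral>w. 1 + (Z w)\<^sup>2 \<partial>P)"
      by (rule Bochner_Integration.integral_mono[OF integrable_abs[OF iZ] ib]) (simp add: pt)
    also have "\<dots> = 1 + (\<integral>w. (Z w)\<^sup>2 \<partial>P)" using isq by (simp add: prob_space)
    finally show "\<bar>\<integral>w. Z w \<partial>P\<bar> \<le> 1 + enn2real S" using iS by linarith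
  qed
  have facts: "integrable P X \<and> integrable P Y \<and> integrable P (\<lambda>w. X w * Y w)
      \<and> \<bar>\<integral>w. X w \<partial>P\<bar> \<le> 1 + B \<and> \<bar>\<integral>w. Y w \<partial>P\<bar> \<le> 1 + B \<and> \<bar>\<integral>w. X w * Y w \<partial>P\<bar> \<le> 1 + B"
    if P: "P \<in> Ps" for P
  proof -
    interpret prob_space P by (rule Pp[OF P])
    have sX: "integrable P (\<lambda>w. (X w)\<^sup>2) \<and> (\<integral>w. (X w)\<^sup>2 \<partial>P) \<le> enn2real SX"
      by (rule sq[OF P Xm[OF P] SX_def SXf])
    have sY: "integrable P (\<lambda>w. (Y w)\<^sup>2) \<and> (\<integral>w. (Y w)\<^sup>2 \<partial>P) \<le> enn2real SY"
      by (rule sq[OF P Ym[OF P] SY_def SYf])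
    have lX: "integrable P X \<and> \<bar>\<integral>w. X w \<partial>P\<bar> \<le> 1 + enn2real SX"
      using sX by (intro lin[OF P Xm[OF P]]) auto
    have lY: "integrable P Y \<and> \<bar>\<integral>w. Y w \<partial>P\<bar> \<le> 1 + enn2real SY"
      using sY by (intro lin[OF P Ym[OF P]]) auto
    have pt: "\<bar>x * y\<bar> \<le> x\<^sup>2 + y\<^sup>2" for x y :: real
    proof -
      have "0 \<le> (\<bar>x\<bar> - \<bar>y\<bar>)\<^sup>2" by simp
      then have "2 * (\<bar>x\<bar> * \<bar>y\<bar>) \<le> x\<^sup>2 + y\<^sup>2" by (simp add: power2_eq_square algebra_simps)
      moreover have "0 \<le> \<bar>x\<bar> * \<bar>y\<bar>" by simp
      ultimately show ?thesis unfolding abs_mult by linarith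
    qed
    have ib: "integrable P (\<lambda>w. (X w)\<^sup>2 + (Y w)\<^sup>2)" using sX sY by simp
    have mXY: "(\<lambda>w. X w * Y w) \<in> borel_measurable P" using Xm[OF P] Ym[OF P] by measurable
    have iXY: "integrable P (\<lambda>w. X w * Y w)"
      by (rule Bochner_Integration.integrable_bound[OF ib mXY]) (use pt in \<open>auto intro!: AE_I2 order.trans[OF _ abs_ge_self]\<close>)
    have "\<bar>\<integral>w. X w * Y w \<partial>P\<bar> \<le> (\<integral>w. \<bar>X w * Y w\<bar> \<partial>P)" by (rule integral_abs_bound)
    also have "\<dots> \<le> (\<integral>w. (X w)\<^sup>2 + (Y w)\<^sup>2 \<partial>P)"
      by (rule Bochner_Integration.integral_mono[OF integrable_abs[OF iXY] ib]) (rule pt)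
    also have "\<dots> = (\<integral>w. (X w)\<^sup>2 \<partial>P) + (\<integral>w. (Y w)\<^sup>2 \<partial>P)" using sX sY by simp
    finally have "\<bar>\<integral>w. X w * Y w \<partial>P\<bar> \<le> 1 + B" using sX sY unfolding B_def by linarith
    moreover have "0 \<le> enn2real SX" "0 \<le> enn2real SY" by auto
    ultimately show ?thesis using lX lY iXY unfolding B_def by linarith
  qed
  define a where "a = (\<lambda>P. \<integral>w. X w \<partial>P)"
  define b where "b = (\<lambda>P. \<integral>w. Y w \<partial>P)"
  define c where "c = (\<lambda>P. \<integral>w. X w * Y w \<partial>P)"
  have int1: "(\<integral>w. (X w - m1) * (Y w - m2) \<partial>P) = c P - m2 * a P - m1 * b P + m1 * m2"
    if P: "P \<in> Ps" for P m1 m2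
  proof -
    interpret prob_space P by (rule Pp[OF P])
    have e: "(\<lambda>w. (X w - m1) * (Y w - m2)) = (\<lambda>w. X w * Y w - m2 * X w - m1 * Y w + m1 * m2)"
      by (rule ext) (simp add: algebra_simps)
    show ?thesis unfolding e a_def b_def c_def using facts[OF P] by (simp add: prob_space)
  qed
  show ?thesis
  proof (rule abs_main[where I=Ps and a=a and b=b and c=c and K="1 + B"])
    show "Ps \<noteq> {}" by (rule Ps_ne)
    show "\<And>P. P \<in> Ps \<Longrightarrow> \<bar>a P\<bar> \<le> 1 + B \<and> \<bar>b P\<bar> \<le> 1 + B \<and> \<bar>c P\<bar> \<le> 1 + B"
      unfolding a_def b_def c_def using facts by blast
    show "E (\<lambda>w. (X w - m1) * (Y w - m2)) = (SUP P\<in>Ps. c P - m2 * a P - m1 * b P + m1 * m2)" for m1 m2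
      unfolding E_def sublin_exp_def by (rule SUP_cong) (auto simp: int1)
    show "E (\<lambda>w. - ((X w - m1) * (Y w - m2))) = (SUP P\<in>Ps. - (c P - m2 * a P - m1 * b P + m1 * m2))" for m1 m2
      unfolding E_def sublin_exp_def by (rule SUP_cong) (auto simp: int1)
    show "E (\<lambda>w. X w * Y w) = (SUP P\<in>Ps. c P)" unfolding E_def sublin_exp_def c_def ..
    show "E (\<lambda>w. - (X w * Y w)) = (SUP P\<in>Ps. - c P)" unfolding E_def sublin_exp_def c_def by simp
    show "uX = (SUP P\<in>Ps. a P)" unfolding uX_def mu_up_def sublin_exp_def a_def ..
    show "uY = (SUP P\<in>Ps. b P)" unfolding uY_def mu_up_def sublin_exp_def b_def ..
    show "lX = - (SUP P\<in>Ps. - a P)" unfolding lX_def mu_lo_def sublin_exp_def a_def by simp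
    show "lY = - (SUP P\<in>Ps. - b P)" unfolding lY_def mu_lo_def sublin_exp_def b_def by simp
    show "Cu = (SUP m2\<in>{lY..uY}. INF m1\<in>{lX..uX}. E (\<lambda>w. (X w - m1) * (Y w - m2)))"
      unfolding Cu_def upper_cov_def E_def lY_def uY_def lX_def uX_def ..
    show "Cl = (INF m2\<in>{lY..uY}. SUP m1\<in>{lX..uX}. - E (\<lambda>w. - ((X w - m1) * (Y w - m2))))"
      unfolding Cl_def lower_cov_def E_def lY_def uY_def lX_def uX_def ..
    show "rX = (uX + lX) / 2" "rY = (uY + lY) / 2" "dX = uX - lX" "dY = uY - lY"
      unfolding rX_def rY_def dX_def dY_def uX_def lX_def uY_def lY_def by simp_all
  qed
qed

end
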